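(* Let $G$ be the Heawood graph. Then $M(G)=Z(G)=6$.
   Context: The Heawood graph is the bipartite incidence graph of the Fano plane: its $14$ vertices are the $7$ points $1,\dots,7$ and the $7$ lines $\{1,2,4\},\{2,3,5\},\{3,4,6\},\{4,5,7\},\{5,6,1\},\{6,7,2\},\{7,1,3\}$, and a point is adjacent to a line if and only if it lies on it; it is $3$-regular. For a graph $G$ on vertices $w_1,\dots,w_N$, $S(G)$ is the set of real symmetric $N\times N$ matrices $A$ with $a_{st}\neq 0$ for $s\ne t$ if and only if $w_s,w_t$ are adjacent (diagonal arbitrary); $M(G)$ is the maximum nullity of a matrix in $S(G)$. Zero forcing: color each vertex black or white; if a black vertex has exactly one white neighbor, that neighbor is recolored black. A set $Z$ is a zero forcing set if starting with exactly $Z$ black and applying this rule repeatedly makes all vertices black; $Z(G)$ is the minimum size of a zero forcing set. *)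

theory Defs
  imports "HOL-Analysis.Analysis"
begin

definition S_graph :: "('v::finite \<Rightarrow> 'v \<Rightarrow> bool) \<Rightarrow> (real^'v^'v) set" where
  "S_graph adj = {A. transpose A = A \<and>
                     (\<forall>s t. s \<noteq> t \<longrightarrow> (A $ s $ t \<noteq> 0 \<longleftrightarrow> adj s t))}"

definition nullity :: "real^'v^'v \<Rightarrow> nat" where
  "nullity A = dim {x :: real^'v. A *v x = 0}"

definition max_nullity :: "('v::finite \<Rightarrow> 'v \<Rightarrow> bool) \<Rightarrow> nat" where
  "max_nullity adj = Max (nullity ` S_graph adj)"

inductive_set forced :: "('v \<Rightarrow> 'v \<Rightarrow> bool) \<Rightarrow> 'v set \<Rightarrow> 'v set"
  for adj :: "'v \<Rightarrow> 'v \<Rightarrow> bool" and Z :: "'v set" where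
  init: "z \<in> Z \<Longrightarrow> z \<in> forced adj Z"
| force: "\<lbrakk>u \<in> forced adj Z; adj u w;
           \<And>w'. \<lbrakk>adj u w'; w' \<noteq> w\<rbrakk> \<Longrightarrow> w' \<in> forced adj Z\<rbrakk>
          \<Longrightarrow> w \<in> forced adj Z"

definition zero_forcing_set :: "('v \<Rightarrow> 'v \<Rightarrow> bool) \<Rightarrow> 'v set \<Rightarrow> bool" where
  "zero_forcing_set adj Z \<longleftrightarrow> forced adj Z = UNIV"

definition zero_forcing_number :: "('v::finite \<Rightarrow> 'v \<Rightarrow> bool) \<Rightarrow> nat" where
  "zero_forcing_number adj = Min (card ` {Z. zero_forcing_set adj Z})"

datatype heawood_vertex =
  P1 | P2 | P3 | P4 | P5 | P6 | P7
| L124 | L235 | L346 | L457 | L561 | L672 | L713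

lemma heawood_vertex_UNIV:
  "(UNIV :: heawood_vertex set) =
   {P1, P2, P3, P4, P5, P6, P7, L124, L235, L346, L457, L561, L672, L713}"
  using heawood_vertex.exhaust by blast

instance heawood_vertex :: finite
  by standard (simp add: heawood_vertex_UNIV)

fun line_points :: "heawood_vertex \<Rightarrow> heawood_vertex set" where
  "line_points L124 = {P1, P2, P4}"
| "line_points L235 = {P2, P3, P5}"
| "line_points L346 = {P3, P4, P6}"
| "line_points L457 = {P4, P5, P7}"
| "line_points L561 = {P5, P6, P1}"
| "line_points L672 = {P6, P7, P2}"
| "line_points L713 = {P7, P1, P3}"
| "line_points _ = {}"

definition heawood_adj :: "heawood_vertex \<Rightarrow> heawood_vertex \<Rightarrow> bool" where
  "heawood_adj x y \<longleftrightarrow> x \<in> line_points y \<or> y \<in> line_points x"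

end

theory Submission
  imports Defs
begin


lemma forced_zero:
  fixes A :: "real^'v::finite^'v" and adj
  assumes A: "A \<in> S_graph adj" and x: "A *v x = 0" and xz: "\<forall>z\<in>Z. x$z = 0"
    and w: "w \<in> forced adj Z"
  shows "x$w = 0"
  using w
proof induction
  case (init z) then show ?case using xz by auto
next
  case (force u w)
  show ?case
  proof (cases "w = u")
    case True with force show ?thesis by simp
  next
    case False
    have row: "(\<Sum>v\<in>UNIV. A$u$v * x$v) = 0"
    proof -
      have "(A *v x)$u = 0" using x by simp
      then show ?thesis by (simp add: matrix_vector_mult_def)
    qed
    have oth: "\<forall>v\<in>UNIV-{w}. A$u$v * x$v = 0"
    proof
      fix v assume v: "v \<in> UNIV - {w}"
      show "A$u$v * x$v = 0"
      proof (cases "v = u")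
        case True then show ?thesis using force by simp
      next
        case False
        show ?thesis
        proof (cases "adj u v")
          case True then show ?thesis using force v by auto
        next
          case F: False
          have "\<forall>s t. s \<noteq> t \<longrightarrow> (A $ s $ t \<noteq> 0) = adj s t" using A unfolding S_graph_def by simp
          then have "A$u$v = 0" using F False by metis
          then show ?thesis by simp
        qed
      qed
    qed
    have "(\<Sum>v\<in>UNIV. A$u$v * x$v) = A$u$w * x$w + (\<Sum>v\<in>UNIV-{w}. A$u$v * x$v)"
      by (simp add: sum.remove)
    also have "\<dots> = A$u$w * x$w" using sum.neutral[OF oth] by simp
    finally have "A$u$w * x$w = 0" using row by simp
    moreover have "A$u$w \<noteq> 0" using A False force(2) unfolding S_graph_def by auto
    ultimately show ?thesis by simp
  qed
qed

lemma nullity_le: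
  fixes A :: "real^'v::finite^'v" and adj
  assumes A: "A \<in> S_graph adj" and Z: "zero_forcing_set adj Z"
  shows "nullity A \<le> card Z"
proof -
  define N where "N = {x :: real^'v. A *v x = 0}"
  define P where "P = (\<lambda>x::real^'v. \<Sum>i\<in>Z. scaleR (x$i) (axis i 1 :: real^'v))"
  have lin: "linear P" unfolding P_def
    by (rule linearI) (simp_all add: scaleR_add_left sum.distrib scaleR_sum_right)
  have sub: "subspace N" unfolding N_def
    by (auto simp: subspace_def matrix_vector_right_distrib matrix_vector_mult_scaleR)
  have Pc: "P x $ j = (if j \<in> Z then x$j else 0)" for x j
    unfolding P_def by (simp add: sum_component axis_def if_distrib sum.delta cong: if_cong)
  have inj: "inj_on P (span N)"
  proof -
    have "x = 0" if "x \<in> N" "P x = 0" for x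
    proof -
      have "\<forall>z\<in>Z. x$z = 0" using that(2) Pc by (metis zero_index)
      then have "x$w = 0" for w
        using forced_zero[OF A, of x Z w] that(1) Z unfolding N_def zero_forcing_set_def by auto
      then show ?thesis by (simp add: vec_eq_iff)
    qed
    moreover have spN: "span N = N" using sub by (simp add: span_eq_iff)
    ultimately show ?thesis using linear_injective_on_subspace_0[OF lin, of "N"] spN sub
      by metis
  qed
  have "dim N = dim (P ` N)" using dim_image_eq[OF lin inj] by simp
  also have "\<dots> \<le> card ((\<lambda>i. axis i 1 :: real^'v) ` Z)"
  proof (rule dim_le_card)
    show "P ` N \<subseteq> span ((\<lambda>i. axis i 1) ` Z)"
      unfolding P_def
      by (auto intro!: span_sum[OF span_scale[OF span_base]])
  qed simp
  also have "\<dots> \<le> card Z" by (rule card_image_le) simp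
  finally show ?thesis unfolding nullity_def N_def .
qed



definition A0 :: "real^heawood_vertex^heawood_vertex" where
  "A0 = (\<chi> i j. if i = j then (if line_points i = {} then 1 else 2)
                 else if heawood_adj i j then 1 else 0)"

lemma A0_S: "A0 \<in> S_graph heawood_adj"
  unfolding S_graph_def A0_def
  by (auto simp: vec_eq_iff transpose_def heawood_adj_def)

definition nv :: "heawood_vertex \<Rightarrow> real^heawood_vertex" where
  "nv L = (\<chi> i. (if i = L then 1 else 0) - (if i = L713 then 1 else 0)
     - (if i \<in> line_points L then 1 else 0) + (if i \<in> line_points L713 then 1 else 0))"

lemma nv_null_L124: "A0 *v nv L124 = 0"
  unfolding vec_eq_iff
proof
  fix i show "(A0 *v nv L124) $ i = 0 $ i"
    by (cases i; simp add: matrix_vector_mult_def heawood_vertex_UNIV A0_def nv_def heawood_adj_def)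
qed

lemma nv_null_L235: "A0 *v nv L235 = 0"
  unfolding vec_eq_iff
proof
  fix i show "(A0 *v nv L235) $ i = 0 $ i"
    by (cases i; simp add: matrix_vector_mult_def heawood_vertex_UNIV A0_def nv_def heawood_adj_def)
qed

lemma nv_null_L346: "A0 *v nv L346 = 0"
  unfolding vec_eq_iff
proof
  fix i show "(A0 *v nv L346) $ i = 0 $ i"
    by (cases i; simp add: matrix_vector_mult_def heawood_vertex_UNIV A0_def nv_def heawood_adj_def)
qed

lemma nv_null_L457: "A0 *v nv L457 = 0"
  unfolding vec_eq_iff
proof
  fix i show "(A0 *v nv L457) $ i = 0 $ i"
    by (cases i; simp add: matrix_vector_mult_def heawood_vertex_UNIV A0_def nv_def heawood_adj_def)
qed

lemma nv_null_L561: "A0 *v nv L561 = 0"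
  unfolding vec_eq_iff
proof
  fix i show "(A0 *v nv L561) $ i = 0 $ i"
    by (cases i; simp add: matrix_vector_mult_def heawood_vertex_UNIV A0_def nv_def heawood_adj_def)
qed

lemma nv_null_L672: "A0 *v nv L672 = 0"
  unfolding vec_eq_iff
proof
  fix i show "(A0 *v nv L672) $ i = 0 $ i"
    by (cases i; simp add: matrix_vector_mult_def heawood_vertex_UNIV A0_def nv_def heawood_adj_def)
qed


definition Ls :: "heawood_vertex set" where
  "Ls = {L124, L235, L346, L457, L561, L672}"

lemma nv_null: "L \<in> Ls \<Longrightarrow> A0 *v nv L = 0"
  unfolding Ls_def using nv_null_L124 nv_null_L235 nv_null_L346 nv_null_L457
    nv_null_L561 nv_null_L672 by auto

lemma nv_comp: "L \<in> Ls \<Longrightarrow> K \<in> Ls \<Longrightarrow> nv L $ K = (if K = L then 1 else 0)"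
  unfolding Ls_def nv_def by auto

lemma nv_inj: "inj_on nv Ls"
proof (rule inj_onI)
  fix L K assume "L \<in> Ls" "K \<in> Ls" "nv L = nv K"
  then have "nv L $ K = nv K $ K" by simp
  then show "L = K" using nv_comp[OF \<open>L \<in> Ls\<close> \<open>K \<in> Ls\<close>] nv_comp[OF \<open>K \<in> Ls\<close> \<open>K \<in> Ls\<close>]
    by (auto split: if_splits)
qed

lemma card_Ls: "card Ls = 6" unfolding Ls_def by simp

lemma nv_indep: "independent (nv ` Ls)"
proof -
  have fin: "finite (nv ` Ls)" unfolding Ls_def by simp
  have "u v = 0" if sum0: "(\<Sum>v\<in>nv ` Ls. u v *\<^sub>R v) = 0" and v: "v \<in> nv ` Ls" for u v
  proof -
    obtain K where K: "K \<in> Ls" "v = nv K" using v by auto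
    have "(\<Sum>v\<in>nv ` Ls. u v *\<^sub>R v) = (\<Sum>L\<in>Ls. u (nv L) *\<^sub>R nv L)"
      by (simp add: sum.reindex[OF nv_inj])
    then have "0 = (\<Sum>L\<in>Ls. u (nv L) *\<^sub>R nv L) $ K" using sum0 by simp
    also have "\<dots> = (\<Sum>L\<in>Ls. u (nv L) * (if K = L then 1 else 0))"
      by (simp add: sum_component nv_comp[OF _ K(1)])
    also have "\<dots> = u (nv K)" using K(1) unfolding Ls_def by auto
    finally show ?thesis using K by simp
  qed
  then show ?thesis using dependent_finite[OF fin] by auto
qed

lemma nullity_A0: "6 \<le> nullity A0"
proof -
  have "card (nv ` Ls) \<le> dim {x. A0 *v x = 0}"
    by (rule independent_card_le_dim) (use nv_null nv_indep in auto)
  moreover have "card (nv ` Ls) = 6" using card_image[OF nv_inj] card_Ls by simp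
  ultimately show ?thesis unfolding nullity_def by simp
qed



definition Z0 :: "heawood_vertex set" where "Z0 = {P1, P2, P3, L124, L235, L346}"

lemma card_Z0: "card Z0 = 6" unfolding Z0_def by simp

fun nb :: "heawood_vertex \<Rightarrow> heawood_vertex set" where
  "nb P1 = {L124, L561, L713}"
| "nb P2 = {L124, L235, L672}"
| "nb P3 = {L235, L346, L713}"
| "nb P4 = {L124, L346, L457}"
| "nb P5 = {L235, L457, L561}"
| "nb P6 = {L346, L561, L672}"
| "nb P7 = {L457, L672, L713}"
| "nb v = line_points v"

lemma adj_nb: "heawood_adj u w \<longleftrightarrow> w \<in> nb u"
  by (cases u; cases w; simp add: heawood_adj_def)

lemma hforce:
  assumes "u \<in> forced heawood_adj Z" "w \<in> nb u" "nb u - {w} \<subseteq> forced heawood_adj Z"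
  shows "w \<in> forced heawood_adj Z"
proof (rule forced.force[of u])
  show "u \<in> forced heawood_adj Z" by fact
  show "heawood_adj u w" using assms(2) by (simp add: adj_nb)
  fix w' assume "heawood_adj u w'" "w' \<noteq> w"
  then show "w' \<in> forced heawood_adj Z" using assms(3) by (auto simp: adj_nb)
qed

lemma Z0_zf: "zero_forcing_set heawood_adj Z0"
proof -
  let ?F = "forced heawood_adj Z0"
  have z: "P1 \<in> ?F" "P2 \<in> ?F" "P3 \<in> ?F" "L124 \<in> ?F" "L235 \<in> ?F" "L346 \<in> ?F"
    by (auto intro: forced.init simp: Z0_def)
  have a1: "L672 \<in> ?F" by (rule hforce[OF z(2)]) (simp_all add: insert_Diff_if z)
  have a2: "L713 \<in> ?F" by (rule hforce[OF z(3)]) (simp_all add: insert_Diff_if z a1)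
  have a3: "P4 \<in> ?F" by (rule hforce[OF z(4)]) (simp_all add: insert_Diff_if z a1 a2)
  have a4: "P5 \<in> ?F" by (rule hforce[OF z(5)]) (simp_all add: insert_Diff_if z a1 a2 a3)
  have a5: "P6 \<in> ?F" by (rule hforce[OF z(6)]) (simp_all add: insert_Diff_if z a1 a2 a3 a4)
  have a6: "P7 \<in> ?F" by (rule hforce[OF a1]) (simp_all add: insert_Diff_if z a1 a2 a3 a4 a5)
  have a7: "L561 \<in> ?F" by (rule hforce[OF z(1)]) (simp_all add: insert_Diff_if z a1 a2 a3 a4 a5 a6)
  have a8: "L457 \<in> ?F" by (rule hforce[OF a3]) (simp_all add: insert_Diff_if z a1 a2 a3 a4 a5 a6 a7)
  have "UNIV \<subseteq> ?F" unfolding heawood_vertex_UNIV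
    using z a1 a2 a3 a4 a5 a6 a7 a8 by simp
  then show ?thesis unfolding zero_forcing_set_def by blast
qed


theorem mainTheorem8:
  shows "max_nullity heawood_adj = 6 \<and> zero_forcing_number heawood_adj = 6"
proof
  have le6: "nullity A \<le> 6" if "A \<in> S_graph heawood_adj" for A
    using nullity_le[OF that Z0_zf] card_Z0 by simp
  have A0in: "nullity A0 = 6" using le6[OF A0_S] nullity_A0 by simp
  have fin1: "finite (nullity ` S_graph heawood_adj)"
    by (rule finite_subset[of _ "{..6}"]) (use le6 in auto)
  show "max_nullity heawood_adj = 6" unfolding max_nullity_def
    by (rule Max_eqI[OF fin1]) (use le6 A0in A0_S in \<open>auto intro: image_eqI[of _ _ A0]\<close>)
  have ge6: "6 \<le> card Z" if "zero_forcing_set heawood_adj Z" for Z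
    using nullity_le[OF A0_S that] nullity_A0 by simp
  have fin2: "finite (card ` {Z. zero_forcing_set heawood_adj Z})" by simp
  show "zero_forcing_number heawood_adj = 6" unfolding zero_forcing_number_def
    by (rule Min_eqI[OF fin2]) (use ge6 Z0_zf card_Z0 in \<open>auto intro: image_eqI[of _ _ Z0]\<close>)
qed

end
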